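(* Let $\mathbf c:[-l/2,l/2]\to\mathbb R^3$ ($l>0$) be an embedded arc parametrized by arc-length with nowhere vanishing curvature, and let $C$ be its image. Then $C$ admits a positive symmetry and a negative symmetry at the same time if and only if $C$ lies in a plane and $C$ has a non-trivial symmetry.
   Context: A symmetry of $C$ is an isometry $T\ne\mathrm{id}$ of $\mathbb R^3$ with $T(C)=C$; it is non-trivial if $T(\mathbf x)\ne\mathbf x$ for some $\mathbf x\in C$, and positive (resp. negative) if $T$ preserves (resp. reverses) the orientation of $\mathbb R^3$. *)

theory Defs
  imports "HOL-Analysis.Analysis"
begin

definition isometry3 :: "(real^3 \<Rightarrow> real^3) \<Rightarrow> bool" where
  "isometry3 T \<longleftrightarrow> (\<forall>x y. dist (T x) (T y) = dist x y)"

definition linear_part :: "(real^3 \<Rightarrow> real^3) \<Rightarrow> real^3 \<Rightarrow> real^3" where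
  "linear_part T = (\<lambda>x. T x - T 0)"

definition orientation_preserving :: "(real^3 \<Rightarrow> real^3) \<Rightarrow> bool" where
  "orientation_preserving T \<longleftrightarrow> det (matrix (linear_part T)) > 0"

definition orientation_reversing :: "(real^3 \<Rightarrow> real^3) \<Rightarrow> bool" where
  "orientation_reversing T \<longleftrightarrow> det (matrix (linear_part T)) < 0"

definition symmetry_of :: "(real^3) set \<Rightarrow> (real^3 \<Rightarrow> real^3) \<Rightarrow> bool" where
  "symmetry_of C T \<longleftrightarrow> isometry3 T \<and> T \<noteq> id \<and> T ` C = C"

definition nontrivial_symmetry_of :: "(real^3) set \<Rightarrow> (real^3 \<Rightarrow> real^3) \<Rightarrow> bool" where
  "nontrivial_symmetry_of C T \<longleftrightarrow> symmetry_of C T \<and> (\<exists>x\<in>C. T x \<noteq> x)"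

definition positive_symmetry_of :: "(real^3) set \<Rightarrow> (real^3 \<Rightarrow> real^3) \<Rightarrow> bool" where
  "positive_symmetry_of C T \<longleftrightarrow> symmetry_of C T \<and> orientation_preserving T"

definition negative_symmetry_of :: "(real^3) set \<Rightarrow> (real^3 \<Rightarrow> real^3) \<Rightarrow> bool" where
  "negative_symmetry_of C T \<longleftrightarrow> symmetry_of C T \<and> orientation_reversing T"

definition lies_in_plane :: "(real^3) set \<Rightarrow> bool" where
  "lies_in_plane C \<longleftrightarrow> (\<exists>n d. n \<noteq> 0 \<and> (\<forall>x\<in>C. n \<bullet> x = d))"

text \<open>Embedded arc of class C^2 on [-l/2,l/2], parametrized by arc length, with nowhere
  vanishing curvature (for arc-length parametrization the curvature is the norm of c'').\<close>
definition arclength_arc_nonzero_curvature :: "real \<Rightarrow> (real \<Rightarrow> real^3) \<Rightarrow> bool" where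
  "arclength_arc_nonzero_curvature l c \<longleftrightarrow>
     (let I = {-l/2..l/2} in
      inj_on c I \<and>
      (\<exists>c' c''.
         (\<forall>t\<in>I. (c has_vector_derivative c' t) (at t within I)) \<and>
         (\<forall>t\<in>I. (c' has_vector_derivative c'' t) (at t within I)) \<and>
         continuous_on I c'' \<and>
         (\<forall>t\<in>I. norm (c' t) = 1) \<and>
         (\<forall>t\<in>I. norm (c'' t) \<noteq> 0)))"

end

theory Submission imports Defs begin


definition rlin :: "real^3 \<Rightarrow> real^3 \<Rightarrow> real^3" where
  "rlin n x = x - (2 * (n \<bullet> x) / (n \<bullet> n)) *\<^sub>R n"

lemma cancel_cube: fixes x N :: real assumes "x * N^3 = -(N^3)" "N \<noteq> 0" shows "x = -1"
proof -
  have "x * N^3 = (-1) * N^3" using assms(1) by simp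
  moreover have "N^3 \<noteq> 0" using assms(2) by simp
  ultimately show ?thesis using mult_right_cancel by blast
qed

lemma det_aux:
  fixes N :: real and v :: "real^3"
  assumes NN: "N = v$1 * v$1 + v$2 * v$2 + v$3 * v$3" and N: "N \<noteq> 0"
  shows "det (\<chi> i j. (if i = j then 1 else 0) - 2 * (v$i * v$j) / N :: real^3^3) = -1"
proof -
  have "det (\<chi> i j. (if i = j then 1 else 0) - 2 * (v$i * v$j) / N :: real^3^3) * N^3 = -(N^3)"
    unfolding det_3 using N
    apply (simp add: field_simps)
    apply (simp add: NN)
    apply algebra
    done
  then show ?thesis using N by (rule cancel_cube)
qed

lemma det_rlin:
  assumes "n \<noteq> 0"
  shows "det (matrix (rlin n)) = -1"
proof -
  define N where "N = n$1*n$1 + n$2*n$2 + n$3*n$3"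
  have nn: "n \<bullet> n = N" unfolding N_def by (simp add: inner_vec_def sum_3)
  have N: "N \<noteq> 0"
    using assms nn by (metis inner_eq_zero_iff)
  have M: "matrix (rlin n) = (\<chi> i j. (if i = j then 1 else 0) - 2 * (n$i * n$j) / N)"
    apply (simp add: matrix_def rlin_def vec_eq_iff nn inner_axis mult.commute)
    apply (auto simp: axis_def)
    done
  show ?thesis unfolding M using det_aux[OF N_def N] .
qed

lemma rlin_linear: "linear (rlin n)"
  by (rule linearI) (simp_all add: rlin_def inner_add_right add_divide_distrib scaleR_add_left algebra_simps)

lemma rlin_inner: assumes "n \<noteq> 0" shows "rlin n z \<bullet> rlin n z = z \<bullet> z"
proof -
  have N: "n \<bullet> n \<noteq> 0" using assms by simp
  show ?thesis using N
    by (simp add: rlin_def inner_diff_left inner_diff_right inner_commute field_simps power2_eq_square)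
qed

lemma rlin_norm: assumes "n \<noteq> 0" shows "norm (rlin n z) = norm z"
  using rlin_inner[OF assms] by (simp add: norm_eq_sqrt_inner)

lemma lp_orth: assumes "isometry3 U" shows "orthogonal_transformation (linear_part U)"
  unfolding orthogonal_transformation_isometry linear_part_def
  using assms by (simp add: isometry3_def dist_norm)

lemma lp_linear: assumes "isometry3 U" shows "linear (linear_part U)"
  using lp_orth[OF assms] by (simp add: orthogonal_transformation_def)

lemma lp_eq: "U x = U 0 + linear_part U x" by (simp add: linear_part_def)

lemma iso_comp: "isometry3 T \<Longrightarrow> isometry3 S \<Longrightarrow> isometry3 (T \<circ> S)"
  by (simp add: isometry3_def)

lemma iso_inj: "isometry3 T \<Longrightarrow> T x = T y \<Longrightarrow> x = y"
  by (metis dist_eq_0_iff isometry3_def)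

lemma lp_comp: assumes "isometry3 T" "isometry3 S"
  shows "linear_part (T \<circ> S) = linear_part T \<circ> linear_part S"
proof
  fix x
  have lin: "linear (linear_part T)" using lp_linear[OF assms(1)] .
  have "(T \<circ> S) x - (T \<circ> S) 0 = linear_part T (S x) - linear_part T (S 0)"
    by (simp add: linear_part_def)
  also have "\<dots> = linear_part T (S x - S 0)" using lin by (simp add: linear_diff)
  finally show "linear_part (T \<circ> S) x = (linear_part T \<circ> linear_part S) x"
    by (simp add: linear_part_def)
qed

lemma det_comp: assumes "isometry3 T" "isometry3 S"
  shows "det (matrix (linear_part (T \<circ> S))) = det (matrix (linear_part T)) * det (matrix (linear_part S))"
  using lp_comp[OF assms] matrix_compose[OF lp_linear[OF assms(2)] lp_linear[OF assms(1)]]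
  by (simp add: det_mul)

lemma det_id: "det (matrix (linear_part id)) = 1"
proof -
  have "linear_part id = id" by (auto simp: linear_part_def)
  then show ?thesis by (simp add: matrix_id_mat_1 det_I)
qed

lemma det_pm: assumes "isometry3 U"
  shows "det (matrix (linear_part U)) = 1 \<or> det (matrix (linear_part U)) = -1"
  using orthogonal_transformation_det[OF lp_orth[OF assms]] by arith

lemma fix_plane:
  assumes iso: "isometry3 U" and ne: "U \<noteq> id" and fx: "\<forall>x\<in>C. U x = x" and p: "p \<in> C"
  shows "lies_in_plane C \<and> (orientation_preserving U \<longrightarrow> (\<exists>v. \<forall>x\<in>C. x - p \<in> span {v}))"
proof -
  define L where "L = linear_part U"
  have orth: "orthogonal_transformation L" using lp_orth[OF iso] L_def by simp
  hence lin: "linear L" and ip: "\<And>v w. L v \<bullet> L w = v \<bullet> w" by (auto simp: orthogonal_transformation_def)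
  define W where "W = {x. L x = x}"
  have sub: "subspace W" unfolding W_def subspace_def using lin
    by (simp add: linear_0 linear_add linear_scale)
  have spW: "span W = W" using sub by simp
  have hx: "x - p \<in> W" if "x \<in> C" for x
  proof -
    have "L (x - p) = L x - L p" using lin by (simp add: linear_diff)
    also have "\<dots> = (U x - U 0) - (U p - U 0)" by (simp add: L_def linear_part_def)
    also have "\<dots> = x - p" using fx that p by simp
    finally show ?thesis by (simp add: W_def)
  qed
  have WU: "W \<noteq> UNIV"
  proof
    assume "W = UNIV"
    hence Lid: "\<And>x. L x = x" by (auto simp: W_def)
    have "U p = U 0 + p" using lp_eq[of U p] Lid L_def by simp
    hence U0: "U 0 = 0" using fx p by simp
    have "U = id" proof
      fix x show "U x = id x" using lp_eq[of U x] Lid L_def U0 by simp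
    qed
    thus False using ne by simp
  qed
  have dimW: "dim W < 3"
  proof -
    have "dim W \<le> DIM(real^3)" by (rule dim_subset_UNIV)
    moreover have "dim W \<noteq> DIM(real^3)" using WU spW dim_eq_full by metis
    ultimately show ?thesis by simp
  qed
  obtain n where n0: "n \<noteq> 0" and nort: "\<And>y. y \<in> span W \<Longrightarrow> orthogonal n y"
    using orthogonal_to_subspace_exists[of W] dimW by auto
  have nW: "n \<bullet> y = 0" if "y \<in> W" for y using nort[of y] that spW by (simp add: orthogonal_def)
  have plane: "lies_in_plane C"
    unfolding lies_in_plane_def
    apply (rule exI[of _ n], rule exI[of _ "n \<bullet> p"]) using n0 nW[OF hx] by (simp add: inner_diff_right)
  have rot: "\<exists>v. \<forall>x\<in>C. x - p \<in> span {v}" if op: "orientation_preserving U"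
  proof (cases "dim W \<le> 1")
    case True
    obtain B where B: "B \<subseteq> W" "independent B" "W \<subseteq> span B" "card B = dim W"
      using basis_exists by blast
    have fB: "finite B" using B(2) by (rule finiteI_independent)
    have "card B \<le> Suc 0" using True B(4) by simp
    hence c1: "\<forall>a1\<in>B. \<forall>a2\<in>B. a1 = a2" using card_le_Suc0_iff_eq[OF fB] by blast
    obtain v where "B \<subseteq> {v}"
    proof (cases "B = {}")
      case True then show ?thesis using that by auto
    next
      case False
      then obtain v where "v \<in> B" by auto
      then show ?thesis using that c1 by auto
    qed
    then have "span B \<subseteq> span {v}" by (rule span_mono)
    then show ?thesis using hx B(3) by blast
  next
    case False
    hence d2: "dim W = 2" using dimW by simp
    have nnot: "n \<notin> W" using nW[of n] n0 by auto
    have "dim (insert n W) = 3" using dim_insert[of n W] spW nnot d2 by simp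
    hence full: "span (insert n W) = UNIV" using dim_eq_full[of "insert n W"] by simp
    obtain k where k: "L n - k *\<^sub>R n \<in> W" using span_breakdown_eq[of "L n" n W] full spW by auto
    define w where "w = L n - k *\<^sub>R n"
    have wW: "w \<in> W" using k w_def by simp
    have "L n \<bullet> w = L n \<bullet> L w" using wW by (simp add: W_def)
    also have "\<dots> = n \<bullet> w" by (rule ip)
    also have "\<dots> = 0" using nW[OF wW] .
    finally have "w \<bullet> w = 0" using nW[OF wW] by (simp add: w_def inner_diff_left)
    hence Ln: "L n = k *\<^sub>R n" using w_def by simp
    have "norm (L n) = norm n" using orth by (simp add: orthogonal_transformation_norm)
    hence "\<bar>k\<bar> = 1" using n0 Ln by simp
    hence "k = 1 \<or> k = -1" by arith
    moreover have "k \<noteq> 1" using Ln nnot by (auto simp: W_def)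
    ultimately have km: "L n = - n" using Ln by simp
    have LR: "L = rlin n"
    proof
      fix x
      obtain j where j: "x - j *\<^sub>R n \<in> W" using span_breakdown_eq[of x n W] full spW by auto
      have "L (x - j *\<^sub>R n) = L x - j *\<^sub>R L n" using lin by (simp add: linear_diff linear_scale)
      hence "L x = (x - j *\<^sub>R n) - j *\<^sub>R n" using j km by (simp add: W_def algebra_simps)
      also have "\<dots> = x - (2 * j) *\<^sub>R n" by (simp only: mult_2 scaleR_left_distrib diff_diff_eq)
      also have "\<dots> = rlin n x"
      proof -
        have "n \<bullet> x = j * (n \<bullet> n)" using nW[OF j] by (simp add: inner_diff_right)
        moreover have "n \<bullet> n \<noteq> 0" using n0 by simp
        ultimately show ?thesis by (simp add: rlin_def)
      qed
      finally show "L x = rlin n x" .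
    qed
    have "det (matrix L) = -1" using LR det_rlin n0 by simp
    thus ?thesis using op by (simp add: orientation_preserving_def L_def)
  qed
  show ?thesis using plane rot by blast
qed



lemma vderiv_quot:
  fixes f :: "real \<Rightarrow> 'a::real_normed_vector"
  assumes "(f has_vector_derivative f') (at t within S)"
  shows "((\<lambda>s. (1/(s-t)) *\<^sub>R (f s - f t)) \<longlongrightarrow> f') (at t within S)"
proof -
  have "((\<lambda>s. norm ((f s - f t) - (s - t) *\<^sub>R f') / norm (s - t)) \<longlongrightarrow> 0) (at t within S)"
    using assms by (simp add: has_vector_derivative_def has_derivative_iff_norm)
  moreover have "eventually (\<lambda>s. norm ((f s - f t) - (s - t) *\<^sub>R f') / norm (s - t)
      = norm ((1/(s-t)) *\<^sub>R (f s - f t) - f')) (at t within S)"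
  proof -
    have "norm ((f s - f t) - (s - t) *\<^sub>R f') / norm (s - t)
      = norm ((1/(s-t)) *\<^sub>R (f s - f t) - f')" if "s \<noteq> t" for s
    proof -
      have "(1/(s-t)) *\<^sub>R (f s - f t) - f' = (1/(s-t)) *\<^sub>R ((f s - f t) - (s - t) *\<^sub>R f')"
        using that by (simp add: scaleR_diff_right)
      then show ?thesis by (simp add: divide_simps)
    qed
    then show ?thesis by (auto simp: eventually_at_filter)
  qed
  ultimately have "((\<lambda>s. norm ((1/(s-t)) *\<^sub>R (f s - f t) - f')) \<longlongrightarrow> 0) (at t within S)"
    by (rule Lim_transform_eventually)
  hence "((\<lambda>s. (1/(s-t)) *\<^sub>R (f s - f t) - f') \<longlongrightarrow> 0) (at t within S)"
    by (rule tendsto_norm_zero_cancel)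
  then show ?thesis by (simp add: Lim_null[symmetric])
qed

lemma key:
  fixes c :: "real \<Rightarrow> real^3" and h :: "real \<Rightarrow> real"
  assumes I: "I = {a..b}" "a < b"
  and dc: "\<forall>t\<in>I. (c has_vector_derivative c' t) (at t within I)" and n1: "\<forall>t\<in>I. norm (c' t) = 1"
  and inj: "inj_on c I"
  and hI: "h ` I = I" and hc: "continuous_on I h" and mono: "strict_mono_on I h"
  and dst: "\<forall>s\<in>I. \<forall>t\<in>I. dist (c (h s)) (c (h t)) = dist (c s) (c t)"
  shows "\<forall>t\<in>I. h t = t"
proof -
  have hin: "h s \<in> I" if "s \<in> I" for s using hI that by blast
  have hmono: "h r < h s" if "r \<in> I" "s \<in> I" "r < s" for r s
    using mono that by (simp add: strict_mono_onD)
  have q: "((\<lambda>s. norm (c s - c t) / \<bar>s - t\<bar>) \<longlongrightarrow> 1) (at t within I)" if t: "t \<in> I" for t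
  proof -
    have "((\<lambda>s. norm ((1/(s-t)) *\<^sub>R (c s - c t))) \<longlongrightarrow> norm (c' t)) (at t within I)"
      using vderiv_quot[OF dc[rule_format, OF t]] by (rule tendsto_norm)
    then show ?thesis using n1 t by (simp add: divide_inverse_commute)
  qed
  have D: "(h has_field_derivative 1) (at t within I)" if t: "t \<in> I" for t
  proof -
    have hlim: "filterlim h (at (h t) within I) (at t within I)"
    proof -
      have "(h \<longlongrightarrow> h t) (at t within I)" using hc t by (simp add: continuous_on_def)
      moreover have "eventually (\<lambda>s. h s \<in> I \<and> h s \<noteq> h t) (at t within I)"
      proof -
        have "h s \<in> I \<and> h s \<noteq> h t" if "s \<in> I" "s \<noteq> t" for s
          using hin[OF that(1)] hmono[OF that(1) t] hmono[OF t that(1)] that(2)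
          by (metis less_irrefl linorder_neqE_linordered_idom)
        then show ?thesis by (auto simp: eventually_at_filter)
      qed
      ultimately show ?thesis by (simp add: filterlim_at)
    qed
    have Q: "((\<lambda>s. norm (c (h s) - c (h t)) / \<bar>h s - h t\<bar>) \<longlongrightarrow> 1) (at t within I)"
      using filterlim_compose[OF q[OF hin[OF t]] hlim] by (simp add: o_def)
    have R0: "((\<lambda>s. (norm (c s - c t) / \<bar>s - t\<bar>) / (norm (c (h s) - c (h t)) / \<bar>h s - h t\<bar>)) \<longlongrightarrow> 1 / 1) (at t within I)"
      by (rule tendsto_divide[OF q[OF t] Q]) simp
    have ev: "eventually (\<lambda>s. (norm (c s - c t) / \<bar>s - t\<bar>) / (norm (c (h s) - c (h t)) / \<bar>h s - h t\<bar>)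
        = (h s - h t) / (s - t)) (at t within I)"
    proof -
      have "(norm (c s - c t) / \<bar>s - t\<bar>) / (norm (c (h s) - c (h t)) / \<bar>h s - h t\<bar>)
        = (h s - h t) / (s - t)" if s: "s \<in> I" "s \<noteq> t" for s
      proof -
        have e: "norm (c (h s) - c (h t)) = norm (c s - c t)"
          using dst s t by (simp add: dist_norm)
        have nz: "norm (c s - c t) \<noteq> 0" using inj s t by (auto simp: inj_on_def)
        have sg: "\<bar>h s - h t\<bar> / \<bar>s - t\<bar> = (h s - h t) / (s - t)"
        proof (cases "s < t")
          case True then have "h s < h t" using hmono s t by blast
          then show ?thesis using True by simp (metis minus_diff_eq minus_divide_divide)
        next
          case False then have "t < s" using s by simp
          then have "h t < h s" using hmono s t by blast
          then show ?thesis using \<open>t < s\<close> by simp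
        qed
        show ?thesis unfolding e using nz sg by (simp add: divide_simps)
      qed
      then show ?thesis by (auto simp: eventually_at_filter)
    qed
    have "((\<lambda>s. (h s - h t) / (s - t)) \<longlongrightarrow> 1) (at t within I)"
      using Lim_transform_eventually[OF R0 ev] by simp
    then show ?thesis by (simp add: has_field_derivative_iff)
  qed
  have D0: "((\<lambda>s. h s - s) has_field_derivative 0) (at t within I)" if "t \<in> I" for t
    using DERIV_diff[OF D[OF that] DERIV_ident] by simp
  obtain k where k: "\<forall>x\<in>I. h x - x = k"
    using has_field_derivative_zero_constant[of I "\<lambda>s. h s - s"] D0 I by (auto simp: convex_real_interval)
  have aI: "a \<in> I" using I by simp
  have "h a = a"
  proof -
    obtain s where s: "s \<in> I" "h s = a" using hI aI by (metis imageE)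
    have "h a \<le> h s" using s aI hmono I by (cases "a = s") (auto intro: less_imp_le)
    moreover have "a \<le> h a" using hin[OF aI] I by simp
    ultimately show ?thesis using s by simp
  qed
  then have "k = 0" using k aI by auto
  then show ?thesis using k by auto
qed

lemma iso_cont: assumes "isometry3 U" shows "continuous_on A U"
proof -
  have "continuous_on UNIV U"
    unfolding continuous_on_iff using assms by (metis isometry3_def)
  then show ?thesis by (rule continuous_on_subset) simp
qed

lemma hsym:
  fixes c :: "real \<Rightarrow> real^3"
  assumes I: "I = {a..b}" and cont: "continuous_on I c" and inj: "inj_on c I"
    and iso: "isometry3 U" and UC: "U ` (c ` I) = c ` I"
  defines "h \<equiv> \<lambda>t. inv_into I c (U (c t))"
  shows "h ` I = I" "continuous_on I h" "\<forall>t\<in>I. c (h t) = U (c t)"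
    "strict_mono_on I h \<or> strict_antimono_on I h"
proof -
  have Uin: "U (c t) \<in> c ` I" if "t \<in> I" for t using UC that by blast
  have hin: "h t \<in> I" if "t \<in> I" for t unfolding h_def using Uin[OF that] by (rule inv_into_into)
  show ch: "\<forall>t\<in>I. c (h t) = U (c t)" unfolding h_def using Uin by (simp add: f_inv_into_f)
  show hI: "h ` I = I"
  proof
    show "h ` I \<subseteq> I" using hin by blast
    show "I \<subseteq> h ` I"
    proof
      fix s assume s: "s \<in> I"
      then have "c s \<in> U ` (c ` I)" using UC by simp
      then obtain t where t: "t \<in> I" "c s = U (c t)" by auto
      then have "h t = s" unfolding h_def using inv_into_f_f[OF inj s] by simp
      then show "s \<in> h ` I" using t by blast
    qed
  qed
  have injh: "inj_on h I"
  proof (rule inj_onI)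
    fix s t assume st: "s \<in> I" "t \<in> I" "h s = h t"
    then have "U (c s) = U (c t)" using ch by metis
    then have "c s = c t" using iso by (metis dist_eq_0_iff isometry3_def)
    then show "s = t" using inj st by (auto simp: inj_on_def)
  qed
  have ci: "continuous_on (c ` I) (inv_into I c)"
    apply (rule continuous_on_inv[OF cont])
    subgoal by (simp add: I)
    subgoal using inv_into_f_f[OF inj] by blast
    done
  have cU: "continuous_on I (\<lambda>t. U (c t))"
    using continuous_on_compose[OF cont iso_cont[OF iso]] by (simp add: o_def)
  show hc: "continuous_on I h" unfolding h_def
    by (rule continuous_on_compose2[OF ci cU]) (use Uin in blast)
  show "strict_mono_on I h \<or> strict_antimono_on I h"
    using injective_eq_monotone_map[of I h] hc injh I by (simp add: is_interval_cc)
qed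

lemma anti_end:
  fixes h :: "real \<Rightarrow> real"
  assumes I: "I = {a..b}" "a \<le> b" and hI: "h ` I = I" and anti: "strict_antimono_on I h"
  shows "h a = b"
proof -
  have aI: "a \<in> I" "b \<in> I" using I by auto
  obtain s where s: "s \<in> I" "h s = b" using hI aI by (metis imageE)
  have "h s \<le> h a"
  proof (cases "a = s")
    case True then show ?thesis by simp
  next
    case False then have "a < s" using s I by simp
    then have "h s < h a" using monotone_onD[OF anti aI(1) s(1)] by simp
    then show ?thesis by simp
  qed
  moreover have "h a \<le> b" using hI aI I by auto
  ultimately show ?thesis using s by simp
qed

lemma not_line:
  fixes c :: "real \<Rightarrow> real^3"
  assumes l: "l > 0" and arc: "arclength_arc_nonzero_curvature l c"
    and line: "\<forall>t\<in>{-l/2..l/2}. c t - p \<in> span {v}"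
  shows False
proof -
  define I where "I = {-l/2..l/2}"
  obtain c' c'' where d1: "\<forall>t\<in>I. (c has_vector_derivative c' t) (at t within I)"
     and d2: "\<forall>t\<in>I. (c' has_vector_derivative c'' t) (at t within I)"
     and n1: "\<forall>t\<in>I. norm (c' t) = 1" and n2: "\<forall>t\<in>I. norm (c'' t) \<noteq> 0"
     using arc unfolding arclength_arc_nonzero_curvature_def Let_def I_def by blast
  have nb: "at t within I \<noteq> bot" if "t \<in> I" for t
  proof -
    have "t islimpt I" using that l by (simp add: I_def)
    then show ?thesis by (metis trivial_limit_within)
  qed
  have inspan: "c' t \<in> span {v}" if t: "t \<in> I" for t
  proof (rule Lim_in_closed_set)
    show "closed (span {v})" by (rule closed_span)
    show "((\<lambda>s. (1/(s-t)) *\<^sub>R (c s - c t)) \<longlongrightarrow> c' t) (at t within I)"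
      using vderiv_quot d1 t by blast
    show "at t within I \<noteq> bot" using nb t .
    have "(1/(s-t)) *\<^sub>R (c s - c t) \<in> span {v}" if "s \<in> I" for s
    proof -
      have "c s - c t = (c s - p) - (c t - p)" by simp
      also have "\<dots> \<in> span {v}" using line that t I_def by (metis span_diff)
      finally show ?thesis by (rule span_mul)
    qed
    then show "eventually (\<lambda>s. (1/(s-t)) *\<^sub>R (c s - c t) \<in> span {v}) (at t within I)"
      by (auto simp: eventually_at_filter)
  qed
  have v0: "v \<noteq> 0"
  proof
    assume "v = 0"
    then have "c' 0 = 0" using inspan[of 0] l by (simp add: I_def)
    moreover have "norm (c' 0) = 1" using n1 l by (simp add: I_def)
    ultimately show False by simp
  qed
  define u where "u = (1 / norm v) *\<^sub>R v"
  have two: "c' t \<in> {u, -u}" if t: "t \<in> I" for t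
  proof -
    obtain k where k: "c' t = k *\<^sub>R v" using inspan[OF t] by (auto simp: span_singleton)
    have "\<bar>k\<bar> * norm v = 1" using n1[rule_format, OF t] k by (metis norm_scaleR)
    then have "k = 1 / norm v \<or> k = - (1 / norm v)" using v0
      by (auto simp: field_simps abs_if split: if_splits)
    then show ?thesis using k u_def by auto
  qed
  have cc': "continuous_on I c'"
    using d2 has_vector_derivative_continuous continuous_on_eq_continuous_within by blast
  have "connected (c' ` I)"
    by (rule connected_continuous_image[OF cc']) (simp add: I_def)
  moreover have "finite (c' ` I)" using two by (meson finite.emptyI finite.insertI finite_subset image_subsetI)
  ultimately have "c' ` I = {} \<or> (\<exists>a. c' ` I = {a})" using connected_finite_iff_sing by blast
  moreover have "0 \<in> I" using l by (simp add: I_def)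
  ultimately obtain w where w: "\<forall>t\<in>I. c' t = w" by blast
  have "(c' has_vector_derivative 0) (at 0 within I)"
  proof -
    have "((\<lambda>s. w) has_vector_derivative 0) (at 0 within I)" by simp
    then show ?thesis
      by (rule has_vector_derivative_transform_within[where d=1]) (use w \<open>0 \<in> I\<close> in auto)
  qed
  then have "c'' 0 = 0" using vector_derivative_unique_within[OF nb[OF \<open>0 \<in> I\<close>]] d2 \<open>0 \<in> I\<close> by blast
  then show False using n2 \<open>0 \<in> I\<close> by auto
qed


theorem propositionA2:
  fixes l :: real and c :: "real \<Rightarrow> real^3"
  assumes "l > 0"
    and "arclength_arc_nonzero_curvature l c"
  shows "((\<exists>T. positive_symmetry_of (c ` {-l/2..l/2}) T) \<and>
          (\<exists>S. negative_symmetry_of (c ` {-l/2..l/2}) S))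
     \<longleftrightarrow> (lies_in_plane (c ` {-l/2..l/2}) \<and>
          (\<exists>T. nontrivial_symmetry_of (c ` {-l/2..l/2}) T))"
proof -
  define I where "I = {-l/2..l/2}"
  define C where "C = c ` I"
  obtain c' c'' where d1: "\<forall>t\<in>I. (c has_vector_derivative c' t) (at t within I)"
     and n1: "\<forall>t\<in>I. norm (c' t) = 1"
     using assms(2) unfolding arclength_arc_nonzero_curvature_def Let_def I_def by blast
  have inj: "inj_on c I" using assms(2) by (simp add: arclength_arc_nonzero_curvature_def Let_def I_def)
  have cont: "continuous_on I c"
    using d1 has_vector_derivative_continuous continuous_on_eq_continuous_within by blast
  have ab: "-l/2 < l/2" using assms(1) by simp
  have aI: "-l/2 \<in> I" "l/2 \<in> I" using ab I_def by auto
  have cab: "c (-l/2) \<noteq> c (l/2)"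
  proof
    assume "c (-l/2) = c (l/2)"
    then have "-l/2 = l/2" using inj_onD[OF inj _ aI(1) aI(2)] by blast
    with ab show False by simp
  qed
  define p where "p = c (-l/2)"
  have pC: "p \<in> C" using aI p_def C_def by simp
  have inc_fix: "\<forall>x\<in>C. U x = x"
    if iso: "isometry3 U" and h: "h ` I = I" "continuous_on I h" "\<forall>t\<in>I. c (h t) = U (c t)" "strict_mono_on I h"
    for U h
  proof -
    have "\<forall>t\<in>I. h t = t"
      apply (rule key[OF I_def ab d1 n1 inj h(1) h(2) h(4)])
      using h(3) iso by (simp add: isometry3_def)
    then show ?thesis using h(3) C_def by auto
  qed
  have dec_nt: "\<exists>x\<in>C. U x \<noteq> x"
    if h: "h ` I = I" "\<forall>t\<in>I. c (h t) = U (c t)" "strict_antimono_on I h" for U h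
  proof -
    have "h (-l/2) = l/2" using anti_end[OF I_def _ h(1) h(3)] ab by simp
    then have "U p \<noteq> p" using h(2) aI cab p_def by metis
    then show ?thesis using pC by blast
  qed
  have hs: "\<exists>h. h ` I = I \<and> continuous_on I h \<and> (\<forall>t\<in>I. c (h t) = U (c t)) \<and>
      (strict_mono_on I h \<or> strict_antimono_on I h)"
    if iso: "isometry3 U" and UC: "U ` C = C" for U
    using hsym[OF I_def cont inj iso UC[unfolded C_def]] by blast
  have "((\<exists>T. positive_symmetry_of C T) \<and> (\<exists>S. negative_symmetry_of C S))
     \<longleftrightarrow> (lies_in_plane C \<and> (\<exists>T. nontrivial_symmetry_of C T))"
  proof
    assume "(\<exists>T. positive_symmetry_of C T) \<and> (\<exists>S. negative_symmetry_of C S)"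
    then obtain T S where T: "positive_symmetry_of C T" and S: "negative_symmetry_of C S" by blast
    have isoT: "isometry3 T" and neT: "T \<noteq> id" and TC: "T ` C = C"
      and opT: "orientation_preserving T" using T by (auto simp: positive_symmetry_of_def symmetry_of_def)
    have isoS: "isometry3 S" and neS: "S \<noteq> id" and SC: "S ` C = C"
      and orS: "orientation_reversing S" using S by (auto simp: negative_symmetry_of_def symmetry_of_def)
    obtain hT where hT: "hT ` I = I" "continuous_on I hT" "\<forall>t\<in>I. c (hT t) = T (c t)"
        "strict_mono_on I hT \<or> strict_antimono_on I hT" using hs[OF isoT TC] by blast
    obtain hS where hS: "hS ` I = I" "continuous_on I hS" "\<forall>t\<in>I. c (hS t) = S (c t)"
        "strict_mono_on I hS \<or> strict_antimono_on I hS" using hs[OF isoS SC] by blast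
    have symT: "symmetry_of C T" and symS: "symmetry_of C S"
      using T S by (auto simp: positive_symmetry_of_def negative_symmetry_of_def)
    show "lies_in_plane C \<and> (\<exists>T. nontrivial_symmetry_of C T)"
    proof (cases "strict_mono_on I hS")
      case True
      then have fS: "\<forall>x\<in>C. S x = x" using inc_fix[OF isoS hS(1-3)] by blast
      have pl: "lies_in_plane C" using fix_plane[OF isoS neS fS pC] by blast
      show ?thesis
      proof (cases "strict_mono_on I hT")
        case True
        then have fT: "\<forall>x\<in>C. T x = x" using inc_fix[OF isoT hT(1-3)] by blast
        then obtain v where "\<forall>x\<in>C. x - p \<in> span {v}" using fix_plane[OF isoT neT fT pC] opT by blast
        then have False using not_line[OF assms(1,2), of p v] C_def I_def by auto
        then show ?thesis ..
      next
        case False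
        then have "strict_antimono_on I hT" using hT(4) by blast
        then have "\<exists>x\<in>C. T x \<noteq> x" using dec_nt[OF hT(1) hT(3)] by blast
        then show ?thesis using pl symT by (auto simp: nontrivial_symmetry_of_def)
      qed
    next
      case False
      then have aS: "strict_antimono_on I hS" using hS(4) by blast
      then have "\<exists>x\<in>C. S x \<noteq> x" using dec_nt[OF hS(1) hS(3)] by blast
      then have nt: "\<exists>T. nontrivial_symmetry_of C T" using symS by (auto simp: nontrivial_symmetry_of_def)
      have pl: "lies_in_plane C"
      proof (cases "strict_mono_on I hT")
        case True
        then have fT: "\<forall>x\<in>C. T x = x" using inc_fix[OF isoT hT(1-3)] by blast
        then show ?thesis using fix_plane[OF isoT neT fT pC] by blast
      next
        case False
        then have aT: "strict_antimono_on I hT" using hT(4) by blast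
        have isoTS: "isometry3 (T \<circ> S)" using iso_comp[OF isoT isoS] .
        have h1: "(hT \<circ> hS) ` I = I" using hT(1) hS(1) image_comp[of hT hS I] by simp
        have h2: "continuous_on I (hT \<circ> hS)"
          using continuous_on_compose[OF hS(2)] hT(2) hS(1) by simp
        have h3: "\<forall>t\<in>I. c ((hT \<circ> hS) t) = (T \<circ> S) (c t)"
        proof
          fix t assume t: "t \<in> I"
          then have "hS t \<in> I" using hS(1) by blast
          then show "c ((hT \<circ> hS) t) = (T \<circ> S) (c t)" using hT(3) hS(3) t by simp
        qed
        have h4: "strict_mono_on I (hT \<circ> hS)"
        proof (rule strict_mono_onI)
          fix r s assume rs: "r \<in> I" "s \<in> I" "r < s"
          have "hS s < hS r" using monotone_onD[OF aS rs] by simp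
          moreover have "hS r \<in> I" "hS s \<in> I" using rs hS(1) by blast+
          ultimately have "hT (hS r) < hT (hS s)" using monotone_onD[OF aT] by simp
          then show "(hT \<circ> hS) r < (hT \<circ> hS) s" by simp
        qed
        have fTS: "\<forall>x\<in>C. (T \<circ> S) x = x" using inc_fix[OF isoTS h1 h2 h3 h4] .
        have "det (matrix (linear_part (T \<circ> S))) < 0"
          using det_comp[OF isoT isoS] opT orS
          by (simp add: orientation_preserving_def orientation_reversing_def mult_pos_neg)
        then have "T \<circ> S \<noteq> id" using det_id by auto
        then show ?thesis using fix_plane[OF isoTS _ fTS pC] by blast
      qed
      show ?thesis using pl nt by blast
    qed
  next
    assume "lies_in_plane C \<and> (\<exists>T. nontrivial_symmetry_of C T)"
    then obtain n d T where n0: "n \<noteq> 0" and nd: "\<forall>x\<in>C. n \<bullet> x = d"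
      and T: "nontrivial_symmetry_of C T" by (auto simp: lies_in_plane_def)
    have isoT: "isometry3 T" and neT: "T \<noteq> id" and TC: "T ` C = C" and ntT: "\<exists>x\<in>C. T x \<noteq> x"
      using T by (auto simp: nontrivial_symmetry_of_def symmetry_of_def)
    define R where "R = (\<lambda>x. x - (2 * (n \<bullet> x - d) / (n \<bullet> n)) *\<^sub>R n)"
    have lpR: "linear_part R = rlin n"
    proof
      fix x
      have "(2 * (n \<bullet> x - d) / (n \<bullet> n)) = 2 * (n \<bullet> x) / (n \<bullet> n) - 2 * d / (n \<bullet> n)"
        by (simp add: right_diff_distrib diff_divide_distrib)
      then show "linear_part R x = rlin n x"
        by (simp add: linear_part_def R_def rlin_def scaleR_diff_left)
    qed
    have isoR: "isometry3 R" unfolding isometry3_def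
    proof (intro allI)
      fix x y
      have "R x - R y = rlin n x - rlin n y" using lp_eq[of R x] lp_eq[of R y] lpR by simp
      also have "\<dots> = rlin n (x - y)" using rlin_linear by (simp add: linear_diff)
      finally show "dist (R x) (R y) = dist x y" using rlin_norm[OF n0] by (simp add: dist_norm)
    qed
    have fR: "\<forall>x\<in>C. R x = x" using nd by (simp add: R_def)
    have RC: "R ` C = C" using fR by force
    have detR: "det (matrix (linear_part R)) = -1" using lpR det_rlin[OF n0] by simp
    have neR: "R \<noteq> id" using detR det_id by auto
    have negR: "negative_symmetry_of C R"
      using isoR neR RC detR by (simp add: negative_symmetry_of_def symmetry_of_def orientation_reversing_def)
    show "(\<exists>T. positive_symmetry_of C T) \<and> (\<exists>S. negative_symmetry_of C S)"
    proof (cases "det (matrix (linear_part T)) = 1")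
      case True
      then have "positive_symmetry_of C T" using isoT neT TC
        by (simp add: positive_symmetry_of_def symmetry_of_def orientation_preserving_def)
      then show ?thesis using negR by blast
    next
      case False
      then have dT: "det (matrix (linear_part T)) = -1" using det_pm[OF isoT] by blast
      have isoTR: "isometry3 (T \<circ> R)" using iso_comp[OF isoT isoR] .
      have "det (matrix (linear_part (T \<circ> R))) = 1" using det_comp[OF isoT isoR] dT detR by simp
      moreover have "(T \<circ> R) ` C = C" using TC RC image_comp[of T R C] by simp
      moreover have "T \<circ> R \<noteq> id"
      proof
        assume "T \<circ> R = id"
        then have "\<forall>x\<in>C. T x = x" using fR by (metis comp_apply id_apply)
        then show False using ntT by blast
      qed
      ultimately have "positive_symmetry_of C (T \<circ> R)" using isoTR
        by (simp add: positive_symmetry_of_def symmetry_of_def orientation_preserving_def)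
      then show ?thesis using negR by blast
    qed
  qed
  then show ?thesis unfolding C_def I_def .
qed

end
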